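(* Let $n\ge2$ and $0<r<1$ (with $r=\alpha/\beta$, $\alpha,\beta>0$, $\alpha^2+\beta^2=1$). Let $\gamma_-^{(n)}$ be the unique root in $(0,1-r^{2/n})$ of $\alpha^2+\beta^2\gamma^n=\alpha\beta(1-\gamma)^{n/2}$, let $\gamma_+^{(n)}=1-r^{2/n}$ and $\gamma_e^{(n)}=r^{2/n}$. Set $r_1^{(n)}=(1+2^{2/n})^{-n/2}$ and $r_2^{(n)}=2^{-n/2}$ (equivalently $\alpha_1^{(n)}=1/\sqrt{1+(1+2^{2/n})^n}$ and $\alpha_2^{(n)}=1/\sqrt{1+2^n}$). Then - if $r<r_1^{(n)}$: $\gamma_e^{(n)}<\gamma_-^{(n)}<\gamma_+^{(n)}$; - if $r_1^{(n)}<r<r_2^{(n)}$: $\gamma_-^{(n)}<\gamma_e^{(n)}<\gamma_+^{(n)}$; - if $r_2^{(n)}<r<1$: $\gamma_-^{(n)}<\gamma_+^{(n)}<\gamma_e^{(n)}$. In particular for $n=2$ the boundaries are $\alpha=1/\sqrt{10}$ and $\alpha=1/\sqrt5$.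
   Context: These are the thresholds of the amplitude-damped state $\rho_n(\gamma)=\mathcal E_\gamma^{\otimes n}(|\psi_n\rangle\langle\psi_n|)$, $|\psi_n\rangle=\alpha|0^n\rangle+\beta|1^n\rangle$, where $\mathcal E_\gamma$ is single-qubit amplitude damping (Kraus operators $|0\rangle\langle0|+\sqrt{1-\gamma}|1\rangle\langle1|$ and $\sqrt\gamma|0\rangle\langle1|$): $\gamma_\mp^{(n)}$ are where the trajectory enters/exits the stabilizer polytope, and $\gamma_e^{(n)}=r^{2/n}$ is where the bipartite negativity vanishes. *)

theory Defs
  imports Complex_Main
begin

text \<open>Threshold where the trajectory exits the stabilizer polytope.\<close>
definition gamma_plus :: "nat \<Rightarrow> real \<Rightarrow> real" where
  "gamma_plus n r = 1 - r powr (2 / real n)"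

text \<open>Threshold where the bipartite negativity vanishes.\<close>
definition gamma_e :: "nat \<Rightarrow> real \<Rightarrow> real" where
  "gamma_e n r = r powr (2 / real n)"

definition gamma_minus_eq :: "nat \<Rightarrow> real \<Rightarrow> real \<Rightarrow> real \<Rightarrow> bool" where
  "gamma_minus_eq n \<alpha> \<beta> g \<longleftrightarrow>
     \<alpha>^2 + \<beta>^2 * g^n = \<alpha> * \<beta> * (1 - g) powr (real n / 2)"

definition r1 :: "nat \<Rightarrow> real" where
  "r1 n = (1 + 2 powr (2 / real n)) powr (- real n / 2)"

definition r2 :: "nat \<Rightarrow> real" where
  "r2 n = 2 powr (- real n / 2)"

definition alpha1 :: "nat \<Rightarrow> real" where
  "alpha1 n = 1 / sqrt (1 + (1 + 2 powr (2 / real n)) ^ n)"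

definition alpha2 :: "nat \<Rightarrow> real" where
  "alpha2 n = 1 / sqrt (1 + 2 ^ n)"

end

theory Submission
  imports Defs
begin

lemma sq_lt: "0 \<le> a \<Longrightarrow> 0 \<le> b \<Longrightarrow> a < b \<longleftrightarrow> a^2 < (b::real)^2"
  by (metis not_le power_mono_iff pos2)

lemma powr_lt_iff: "0 < p \<Longrightarrow> 0 \<le> x \<Longrightarrow> 0 \<le> y \<Longrightarrow> x < y \<longleftrightarrow> x powr p < (y::real) powr p"
  by (metis not_le powr_less_mono2 powr_mono2 less_imp_le)

lemma powr_le_iff: "0 < p \<Longrightarrow> 0 \<le> x \<Longrightarrow> 0 \<le> y \<Longrightarrow> x \<le> y \<longleftrightarrow> x powr p \<le> (y::real) powr p"
  by (metis not_le powr_less_mono2 powr_mono2 less_imp_le)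

lemma alpha_lem:
  fixes \<alpha> \<beta> r A :: real
  assumes "\<alpha> > 0" "\<beta> > 0" "\<alpha>^2 + \<beta>^2 = 1" "r = \<alpha> / \<beta>" "A > 0"
  shows "(r < 1 / A \<longleftrightarrow> \<alpha> < 1 / sqrt (1 + A^2)) \<and> (1 / A < r \<longleftrightarrow> 1 / sqrt (1 + A^2) < \<alpha>)"
proof -
  have s: "sqrt (1 + A^2) > 0" by (simp add: add_pos_nonneg)
  have e1: "\<alpha> < 1 / sqrt (1 + A^2) \<longleftrightarrow> \<alpha>^2 * (1 + A^2) < 1"
  proof -
    have "\<alpha> < 1 / sqrt (1 + A^2) \<longleftrightarrow> \<alpha> * sqrt (1 + A^2) < 1" using s by (simp add: field_simps)
    also have "\<dots> \<longleftrightarrow> (\<alpha> * sqrt (1 + A^2))^2 < 1^2"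
      using assms s sq_lt[of "\<alpha> * sqrt (1 + A^2)" 1] sq_lt[of 1 "\<alpha> * sqrt (1 + A^2)"] by simp
    also have "(\<alpha> * sqrt (1 + A^2))^2 = \<alpha>^2 * (1 + A^2)"
      by (simp add: power_mult_distrib add_pos_nonneg)
    finally show ?thesis by simp
  qed
  have e2: "1 / sqrt (1 + A^2) < \<alpha> \<longleftrightarrow> 1 < \<alpha>^2 * (1 + A^2)"
  proof -
    have "1 / sqrt (1 + A^2) < \<alpha> \<longleftrightarrow> 1 < \<alpha> * sqrt (1 + A^2)" using s by (simp add: field_simps)
    also have "\<dots> \<longleftrightarrow> 1^2 < (\<alpha> * sqrt (1 + A^2))^2"
      using assms s sq_lt[of "\<alpha> * sqrt (1 + A^2)" 1] sq_lt[of 1 "\<alpha> * sqrt (1 + A^2)"] by simp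
    also have "(\<alpha> * sqrt (1 + A^2))^2 = \<alpha>^2 * (1 + A^2)"
      by (simp add: power_mult_distrib add_pos_nonneg)
    finally show ?thesis by simp
  qed
  have f1: "r < 1 / A \<longleftrightarrow> \<alpha> * A < \<beta>" unfolding assms(4) using assms(1,2,5) by (simp add: field_simps)
  have f2: "1 / A < r \<longleftrightarrow> \<beta> < \<alpha> * A" unfolding assms(4) using assms(1,2,5) by (simp add: field_simps)
  have g1: "\<alpha> * A < \<beta> \<longleftrightarrow> (\<alpha> * A)^2 < \<beta>^2"
    using assms by (intro sq_lt) auto
  have g2: "\<beta> < \<alpha> * A \<longleftrightarrow> \<beta>^2 < (\<alpha> * A)^2"
    using assms by (intro sq_lt) auto
  have "\<beta>^2 = 1 - \<alpha>^2" using assms by simp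
  then show ?thesis using e1 e2 f1 f2 g1 g2 by (auto simp: power_mult_distrib algebra_simps)
qed

theorem corollary1:
  fixes n :: nat and \<alpha> \<beta> r g :: real
  assumes n2: "n \<ge> 2"
    and pos: "\<alpha> > 0" "\<beta> > 0"
    and norm: "\<alpha>^2 + \<beta>^2 = 1"
    and rdef: "r = \<alpha> / \<beta>"
    and r01: "0 < r" "r < 1"
    and groot: "0 < g" "g < 1 - r powr (2 / real n)" "gamma_minus_eq n \<alpha> \<beta> g"
  shows "(r < r1 n \<longrightarrow> gamma_e n r < g \<and> g < gamma_plus n r)
       \<and> (r1 n < r \<and> r < r2 n \<longrightarrow> g < gamma_e n r \<and> gamma_e n r < gamma_plus n r)
       \<and> (r2 n < r \<and> r < 1 \<longrightarrow> g < gamma_plus n r \<and> gamma_plus n r < gamma_e n r)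
       \<and> (r < r1 n \<longleftrightarrow> \<alpha> < alpha1 n) \<and> (r1 n < r \<longleftrightarrow> alpha1 n < \<alpha>)
       \<and> (r < r2 n \<longleftrightarrow> \<alpha> < alpha2 n) \<and> (r2 n < r \<longleftrightarrow> alpha2 n < \<alpha>)
       \<and> (n = 2 \<longrightarrow> alpha1 n = 1 / sqrt 10 \<and> alpha2 n = 1 / sqrt 5)"
proof -
  define p :: real where "p = real n / 2"
  define q :: real where "q = 2 / real n"
  define s where "s = r powr q"
  define c :: real where "c = 2 powr q"
  have p0: "p > 0" and q0: "q > 0" using n2 by (auto simp: p_def q_def)
  have qp: "q * p = 1" "p * q = 1" using n2 by (auto simp: p_def q_def)
  have s0: "s > 0" using r01 by (simp add: s_def)
  have s1: "s < 1" using powr_less_mono2[OF q0, of r 1] r01 by (simp add: s_def)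
  have c0: "c > 0" by (simp add: c_def)
  have rs: "r = s powr p" using r01 qp by (simp add: s_def powr_powr)
  have ge: "gamma_e n r = s" and gp: "gamma_plus n r = 1 - s"
    by (simp_all add: gamma_e_def gamma_plus_def s_def q_def)
  have gm: "g < 1 - s" using groot by (simp add: s_def q_def)
  have g1: "g < 1" using gm s0 by simp
  have sq: "(x powr p)^2 = x ^ n" if "x > 0" for x :: real
  proof -
    have "(x powr p)^2 = x powr (2 * p)" by (simp add: power2_eq_square powr_add[symmetric])
    also have "2 * p = real n" by (simp add: p_def)
    finally show ?thesis using that by (simp add: powr_realpow)
  qed
  define G where "G = g powr p"
  define W where "W = (1 - g) powr p"
  have G0: "G > 0" using groot by (simp add: G_def)
  have eq0: "\<alpha>^2 + \<beta>^2 * G^2 = \<alpha> * \<beta> * W"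
    using groot(3) sq[OF groot(1)] by (simp add: gamma_minus_eq_def G_def W_def p_def)
  have al: "\<alpha> = r * \<beta>" using rdef pos by simp
  have eq1: "\<beta>^2 * (r^2 + G^2) = \<beta>^2 * (r * W)"
    using eq0 unfolding al by (simp add: algebra_simps power_mult_distrib power2_eq_square)
  have eq: "r^2 + G^2 = r * W" using eq1 pos by simp
  have lessq: "x < y \<longleftrightarrow> x powr q < y powr q" if "x > 0" "y > 0" for x y :: real
    using that q0 by (intro powr_lt_iff) auto
  have r1eq: "r1 n = 1 / ((1 + c) powr p)"
  proof -
    have e: "- real n / 2 = - p" by (simp add: p_def)
    show ?thesis unfolding r1_def e q_def[symmetric] c_def[symmetric] by (rule powr_minus_divide)
  qed
  have r2eq: "r2 n = 1 / (2 powr p)"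
  proof -
    have e: "- real n / 2 = - p" by (simp add: p_def)
    show ?thesis unfolding r2_def e by (rule powr_minus_divide)
  qed
  have r1q: "r1 n powr q = 1 / (1 + c)"
    using r1eq c0 qp by (simp add: powr_divide powr_powr)
  have r2q: "r2 n powr q = 1 / 2"
    using r2eq qp by (simp add: powr_divide powr_powr)
  have r1pos: "r1 n > 0" using r1eq c0 by simp
  have r2pos: "r2 n > 0" using r2eq by simp
  have A: "r < r1 n \<longleftrightarrow> s * (1 + c) < 1"
    using lessq[OF r01(1) r1pos] r1q c0 by (simp add: s_def field_simps)
  have B: "r1 n < r \<longleftrightarrow> 1 < s * (1 + c)"
    using lessq[OF r1pos r01(1)] r1q c0 by (simp add: s_def field_simps)
  have C: "r < r2 n \<longleftrightarrow> s < 1 - s"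
    using lessq[OF r01(1) r2pos] r2q by (simp add: s_def field_simps)
  have D: "r2 n < r \<longleftrightarrow> 1 - s < s"
    using lessq[OF r2pos r01(1)] r2q by (simp add: s_def field_simps)
  have cp: "c powr p = 2" using qp by (simp add: c_def powr_powr)
  have P1: "s * (1 + c) < 1 \<Longrightarrow> s < g"
  proof (rule ccontr)
    assume h: "s * (1 + c) < 1" "\<not> s < g"
    then have gs: "g \<le> s" by simp
    have "G \<le> r" unfolding G_def rs using gs groot p0 by (simp add: powr_mono2)
    then have "G^2 \<le> r^2" using G0 by (simp add: power_mono)
    moreover have "(1 - s) powr p \<le> W" unfolding W_def using gs s1 p0 by (simp add: powr_mono2)
    ultimately have "r * (1 - s) powr p \<le> 2 * r^2" using eq r01
      by (smt (verit) mult_left_mono)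
    then have "(1 - s) powr p \<le> 2 * r" using r01 by (simp add: power2_eq_square)
    also have "2 * r = (c * s) powr p" using cp rs s0 c0 by (simp add: powr_mult)
    finally have "(1 - s) powr p \<le> (c * s) powr p" .
    moreover have nn: "0 \<le> 1 - s" "0 \<le> c * s" using s1 s0 c0 by auto
    ultimately have "1 - s \<le> c * s" using powr_le_iff[OF p0 nn] by blast
    then show False using h by (simp add: algebra_simps)
  qed
  have P2: "1 < s * (1 + c) \<Longrightarrow> g < s"
  proof (rule ccontr)
    assume h: "1 < s * (1 + c)" "\<not> g < s"
    then have gs: "s \<le> g" by simp
    have "r \<le> G" unfolding G_def rs using gs s0 p0 by (simp add: powr_mono2)
    then have "r^2 \<le> G^2" using r01 by (simp add: power_mono)
    moreover have "W \<le> (1 - s) powr p" unfolding W_def using gs g1 p0 by (simp add: powr_mono2)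
    ultimately have "2 * r^2 \<le> r * (1 - s) powr p" using eq r01
      by (smt (verit) mult_left_mono)
    then have "2 * r \<le> (1 - s) powr p" using r01 by (simp add: power2_eq_square)
    moreover have "2 * r = (c * s) powr p" using cp rs s0 c0 by (simp add: powr_mult)
    ultimately have "(c * s) powr p \<le> (1 - s) powr p" by simp
    moreover have nn: "0 \<le> c * s" "0 \<le> 1 - s" using s1 s0 c0 by auto
    ultimately have "c * s \<le> 1 - s" using powr_le_iff[OF p0 nn] by blast
    then show False using h by (simp add: algebra_simps)
  qed
  have K1: "((1 + c) powr p)^2 = (1 + c)^n" using sq c0 by simp
  have K2: "(2 powr p)^2 = (2::real)^n" using sq by simp
  have a1: "alpha1 n = 1 / sqrt (1 + ((1 + c) powr p)^2)"
    using K1 by (simp add: alpha1_def c_def q_def)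
  have a2: "alpha2 n = 1 / sqrt (1 + (2 powr p)^2)"
    using K2 by (simp add: alpha2_def)
  note L1 = alpha_lem[OF pos norm rdef, of "(1 + c) powr p"]
  note L2 = alpha_lem[OF pos norm rdef, of "2 powr p"]
  have n22: "n = 2 \<longrightarrow> alpha1 n = 1 / sqrt 10 \<and> alpha2 n = 1 / sqrt 5"
    by (simp add: alpha1_def alpha2_def)
  show ?thesis
    using A B C D P1 P2 gm ge gp L1 L2 a1 a2 r1eq r2eq n22 c0 by auto
qed

end
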